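(* Let $q$ be odd and let $U$ be an intersecting family of polynomials over $\mathbb{F}_q$ of degree at most $2$ with $|U|>\frac{q^2+2q-1}{2}$. Suppose $H\subseteq U$ has more than $\frac{q^2+q}{2}$ elements and there exist $\alpha,\beta\in\mathbb{F}_q$ with $h(\alpha)=\beta$ for all $h\in H$. Then $f(\alpha)=\beta$ for every $f\in U$.
   Context: A set of polynomials over $\mathbb{F}_q$ is intersecting if for any two members $f_1,f_2$ the graphs $\{(x,f_i(x)):x\in\mathbb{F}_q\}$ share at least one point. *)

theory Defs
  imports "HOL-Computational_Algebra.Polynomial" "HOL-Library.Cardinality"
begin

definition intersecting :: "'a::field poly set \<Rightarrow> bool" where
  "intersecting U \<longleftrightarrow> (\<forall>f1\<in>U. \<forall>f2\<in>U. \<exists>x. poly f1 x = poly f2 x)"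

end

theory Submission
  imports Defs
begin

lemma deg2_repr: "degree (p::'a::field poly) \<le> 2 \<Longrightarrow> p = [:coeff p 0, coeff p 1, coeff p 2:]"
  apply (rule poly_eqI)
  subgoal for n
    apply (cases n; simp)
    subgoal for m apply (cases m; simp)
      subgoal for k apply (cases k; simp add: coeff_eq_0 numeral_2_eq_2) done done done
  done
lemma poly2: "degree (p::'a::field poly) \<le> 2 \<Longrightarrow> poly p x = coeff p 0 + coeff p 1 * x + coeff p 2 * x^2"
  apply (subst deg2_repr, assumption) by (simp add: algebra_simps power2_eq_square)
lemma eq2: "degree (p::'a::field poly) \<le> 2 \<Longrightarrow> degree q \<le> 2 \<Longrightarrow> coeff p 0 = coeff q 0 \<Longrightarrow>
   coeff p 1 = coeff q 1 \<Longrightarrow> coeff p 2 = coeff q 2 \<Longrightarrow> p = q"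
  by (metis deg2_repr)

lemma lin_unique:
  fixes a0 a1 b0 b1 a r c :: "'a::field"
  assumes "a \<noteq> r" "a0 + a1 * a = b0 + b1 * a" "a0 + a1 * r = b0 + b1 * r"
  shows "a0 = b0 \<and> a1 = b1"
proof -
  have "(a1 - b1) * (a - r) = 0" using assms(2,3) by (simp add: algebra_simps) (metis add_diff_cancel_left' add_diff_eq diff_add_eq assms(2,3))
  then have "a1 = b1" using assms(1) by simp
  then show ?thesis using assms(2) by simp
qed
lemma line_inj:
  fixes g1 g2 :: "'a::field poly"
  assumes "degree g1 \<le> 2" "degree g2 \<le> 2" "coeff g1 2 = coeff g2 2" "a \<noteq> r"
    "poly g1 a = poly g2 a" "poly g1 r = 0" "poly g2 r = 0"
  shows "g1 = g2"
proof -
  have "coeff g1 0 = coeff g2 0 \<and> coeff g1 1 = coeff g2 1"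
    apply (rule lin_unique[OF assms(4)])
    using assms(5-7) by (simp_all add: poly2[OF assms(1)] poly2[OF assms(2)] assms(3))
       (metis add.right_cancel add_diff_cancel_left' diff_add_eq)
  then show ?thesis using eq2 assms(1-3) by blast
qed

lemma unique_root:
  fixes g :: "'a::field poly"
  assumes "degree g \<le> 2" "coeff g 2 \<noteq> 0" "{x. poly g x = 0} = {r}"
  shows "coeff g 1 = - 2 * coeff g 2 * r \<and> coeff g 0 = coeff g 2 * r^2"
proof -
  define a0 a1 a2 where "a0 = coeff g 0" "a1 = coeff g 1" "a2 = coeff g 2"
  have P: "\<And>x. poly g x = a0 + a1 * x + a2 * x^2" using poly2[OF assms(1)] a0_a1_a2_def by simp
  have r0: "a0 + a1 * r + a2 * r^2 = 0" using assms(3) P by auto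
  have fac: "\<And>x. poly g x = (x - r) * (a2 * x + a2 * r + a1)"
    using r0 unfolding P by (simp add: algebra_simps power2_eq_square)
  define s where "s = - (a2 * r + a1) / a2"
  have "a2 * s + a2 * r + a1 = 0" using assms(2) a0_a1_a2_def unfolding s_def by (simp add: field_simps)
  then have "poly g s = 0" using fac by simp
  then have "s = r" using assms(3) by auto
  then have a1: "a1 = -2 * a2 * r" using assms(2) a0_a1_a2_def unfolding s_def by (simp add: field_simps) (metis minus_equation_iff)
  have "a0 = a2 * r^2" using r0 unfolding a1 by (simp add: algebra_simps power2_eq_square)
  then show ?thesis using a1 a0_a1_a2_def by simp
qed
theorem lemma7:
  fixes U H :: "'a::{finite,field} poly set" and \<alpha> \<beta> :: 'a
  assumes "odd CARD('a)"
    and "intersecting U"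
    and "\<forall>f\<in>U. degree f \<le> 2"
    and "real (card U) > (real (CARD('a))^2 + 2 * real (CARD('a)) - 1) / 2"
    and "H \<subseteq> U"
    and "real (card H) > (real (CARD('a))^2 + real (CARD('a))) / 2"
    and "\<forall>h\<in>H. poly h \<alpha> = \<beta>"
  shows "\<forall>f\<in>U. poly f \<alpha> = \<beta>"
proof (rule ccontr)
  assume "\<not> ?thesis"
  then obtain f where fU: "f \<in> U" and fa: "poly f \<alpha> \<noteq> \<beta>" by blast
  define c where "c = \<beta> - poly f \<alpha>"
  have c0: "c \<noteq> 0" using fa unfolding c_def by simp
  define q where "q = CARD('a)"
  have q1: "q \<ge> 1" unfolding q_def by (simp add: Suc_leI)
  define G where "G = (\<lambda>h. h - f) ` H"
  have injG: "inj_on (\<lambda>h. h - f) H" by (rule inj_onI) simp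
  have cardG: "card G = card H" unfolding G_def using card_image[OF injG] .
  have "card H \<noteq> 0"
  proof
    assume "card H = 0"
    moreover have "0 \<le> (real (CARD('a))^2 + real (CARD('a))) / 2"
      by (intro divide_nonneg_pos add_nonneg_nonneg zero_le_power2 of_nat_0_le_iff) auto
    ultimately show False using assms(6) by linarith
  qed
  then have finH: "finite H" by (meson card.infinite)
  have finG: "finite G" unfolding G_def using finH by simp
  have Gdeg: "degree g \<le> 2" if "g \<in> G" for g
    using that assms(3,5) fU unfolding G_def
    by (auto intro: order.trans[OF degree_diff_le_max] max.boundedI)
  have Galpha: "poly g \<alpha> = c" if "g \<in> G" for g
    using that assms(7) unfolding G_def c_def by auto
  have Groot: "\<exists>r. poly g r = 0" if gG: "g \<in> G" for g
  proof -
    obtain h where h: "h \<in> H" "g = h - f" using gG unfolding G_def by auto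
    then obtain x where "poly h x = poly f x" using assms(2,5) fU unfolding intersecting_def by blast
    then show ?thesis using h by auto
  qed
  define A where "A = UNIV - {\<alpha>}"
  have cardA: "card A = q - 1" unfolding A_def q_def by (simp add: card_Diff_singleton)
  define R :: "'a poly \<Rightarrow> 'a set" where "R g = {r. poly g r = 0}" for g
  have RA: "R g \<subseteq> A" if "g \<in> G" for g
    using Galpha[OF that] c0 unfolding R_def A_def by auto
  have Rne: "R g \<noteq> {}" if "g \<in> G" for g using Groot[OF that] unfolding R_def by auto
  have K1: "card {g\<in>G. poly g r = 0} \<le> q" if "r \<in> A" for r
  proof -
    have "inj_on (\<lambda>g. coeff g 2) {g\<in>G. poly g r = 0}"
    proof (rule inj_onI)
      fix g1 g2 assume "g1 \<in> {g\<in>G. poly g r = 0}" "g2 \<in> {g\<in>G. poly g r = 0}" "coeff g1 2 = coeff g2 2"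
      then show "g1 = g2" using line_inj[of g1 g2 \<alpha> r] Gdeg Galpha that unfolding A_def by auto
    qed
    then show ?thesis unfolding q_def by (rule card_inj_on_le) auto
  qed
  define G1 where "G1 = {g\<in>G. card (R g) = 1}"
  define \<phi> :: "'a poly \<Rightarrow> 'a \<times> bool" where "\<phi> g = (SOME r. poly g r = 0, coeff g 2 = 0)" for g
  have phiR: "fst (\<phi> g) = r" if "g \<in> G1" "R g = {r}" for g r
    using that unfolding \<phi>_def R_def by (auto intro!: some_equality)
  have K2: "card G1 \<le> (q - 1) * 2"
  proof -
    have "inj_on \<phi> G1"
    proof (rule inj_onI)
      fix g1 g2 assume g1: "g1 \<in> G1" and g2: "g2 \<in> G1" and eq: "\<phi> g1 = \<phi> g2"
      obtain r1 where r1: "R g1 = {r1}" using g1 unfolding G1_def by (auto simp: card_1_singleton_iff)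
      obtain r2 where r2: "R g2 = {r2}" using g2 unfolding G1_def by (auto simp: card_1_singleton_iff)
      have "r1 = r2" using phiR[OF g1 r1] phiR[OF g2 r2] eq by simp
      have gG: "g1 \<in> G" "g2 \<in> G" using g1 g2 unfolding G1_def by auto
      have ra: "r1 \<noteq> \<alpha>" using RA[OF gG(1)] r1 unfolding A_def by auto
      have p1: "poly g1 r1 = 0" "poly g2 r1 = 0" using r1 r2 \<open>r1 = r2\<close> unfolding R_def by auto
      have same0: "(coeff g1 2 = 0) = (coeff g2 2 = 0)" using eq unfolding \<phi>_def by simp
      show "g1 = g2"
      proof (cases "coeff g1 2 = 0")
        case True
        then show ?thesis using same0 line_inj[of g1 g2 \<alpha> r1] Gdeg gG Galpha ra p1 by auto
      next
        case False
        then have F2: "coeff g2 2 \<noteq> 0" using same0 by simp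
        have u1: "coeff g1 1 = - 2 * coeff g1 2 * r1 \<and> coeff g1 0 = coeff g1 2 * r1^2"
          using unique_root[OF Gdeg[OF gG(1)] False] r1 unfolding R_def by simp
        have u2: "coeff g2 1 = - 2 * coeff g2 2 * r1 \<and> coeff g2 0 = coeff g2 2 * r1^2"
          using unique_root[OF Gdeg[OF gG(2)] F2] r2 \<open>r1 = r2\<close> unfolding R_def by simp
        have "poly g1 \<alpha> = coeff g1 2 * (\<alpha> - r1)^2"
          using u1 poly2[OF Gdeg[OF gG(1)]] by (simp add: algebra_simps power2_eq_square)
        moreover have "poly g2 \<alpha> = coeff g2 2 * (\<alpha> - r1)^2"
          using u2 poly2[OF Gdeg[OF gG(2)]] by (simp add: algebra_simps power2_eq_square)
        ultimately have "coeff g1 2 * (\<alpha> - r1)^2 = coeff g2 2 * (\<alpha> - r1)^2"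
          using Galpha gG by simp
        then have "coeff g1 2 = coeff g2 2" using ra by simp
        then show ?thesis using eq2[OF Gdeg[OF gG(1)] Gdeg[OF gG(2)]] u1 u2 by simp
      qed
    qed
    moreover have "\<phi> ` G1 \<subseteq> A \<times> UNIV"
    proof
      fix y assume "y \<in> \<phi> ` G1"
      then obtain g where g: "g \<in> G1" "y = \<phi> g" by auto
      obtain r where r: "R g = {r}" using g unfolding G1_def by (auto simp: card_1_singleton_iff)
      have "r \<in> A" using RA r g unfolding G1_def by auto
      then show "y \<in> A \<times> UNIV" using phiR[OF g(1) r] g(2) by (simp add: mem_Times_iff)
    qed
    ultimately have "card G1 \<le> card (A \<times> (UNIV :: bool set))"
      by (rule card_inj_on_le) simp
    then show ?thesis using cardA by (simp add: card_cartesian_product)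
  qed
  have swap: "(\<Sum>g\<in>G. card (R g)) = (\<Sum>r\<in>A. card {g\<in>G. poly g r = 0})"
  proof -
    have "(\<Sum>g\<in>G. card (R g)) = (\<Sum>g\<in>G. \<Sum>r\<in>A. if poly g r = 0 then 1 else 0)"
    proof (rule sum.cong[OF refl])
      fix g assume "g \<in> G"
      then have "R g = {r\<in>A. poly g r = 0}" using RA unfolding R_def by auto
      then show "card (R g) = (\<Sum>r\<in>A. if poly g r = 0 then 1 else 0)"
        by (simp add: sum.If_cases Int_def)
    qed
    also have "\<dots> = (\<Sum>r\<in>A. \<Sum>g\<in>G. if poly g r = 0 then 1 else 0)" by (rule sum.swap)
    also have "\<dots> = (\<Sum>r\<in>A. card {g\<in>G. poly g r = 0})"
      by (rule sum.cong[OF refl]) (simp add: sum.If_cases Int_def finG)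
    finally show ?thesis .
  qed
  have "(\<Sum>r\<in>A. card {g\<in>G. poly g r = 0}) \<le> (\<Sum>r\<in>A. q)" by (rule sum_mono) (rule K1)
  then have S1: "(\<Sum>g\<in>G. card (R g)) \<le> (q - 1) * q" using swap cardA by simp
  have "(\<Sum>g\<in>G. (2::nat)) \<le> (\<Sum>g\<in>G. card (R g) + (if g \<in> G1 then 1 else 0))"
  proof (rule sum_mono)
    fix g assume gG: "g \<in> G"
    have c1: "1 \<le> card (R g)" using Rne[OF gG] by (simp add: Suc_le_eq card_gt_0_iff)
    show "2 \<le> card (R g) + (if g \<in> G1 then 1 else 0)"
    proof (cases "g \<in> G1")
      case True then show ?thesis using c1 by simp
    next
      case False then have "card (R g) \<noteq> 1" using gG unfolding G1_def by simp
      then show ?thesis using c1 False by simp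
    qed
  qed
  also have "\<dots> = (\<Sum>g\<in>G. card (R g)) + card G1"
    unfolding sum.distrib G1_def by (simp add: sum.If_cases Int_def finG)
  finally have "2 * card G \<le> (q - 1) * q + (q - 1) * 2" using S1 K2 by simp
  then have "real (2 * card H) \<le> real ((q - 1) * q + (q - 1) * 2)" using cardG by linarith
  then have "2 * real (card H) \<le> (real q - 1) * real q + (real q - 1) * 2"
    using q1 by (simp add: of_nat_diff)
  then show False using assms(6) unfolding q_def[symmetric] by (simp add: power2_eq_square algebra_simps)
qed
end
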